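(* Let $r, s, m, n$ be positive integers, let $f: [nm] \rightarrow \{-r,s\}$ be a function, and let $q = \frac{1}{n} f([nm])$. For $1\le i\le m$ let $I_i=\{(i-1)n+1,(i-1)n+2,\dots,in\}$. Then $[nm]$ can be decomposed into $n$ disjoint $(2n-1)$-bounded gap sequences $S_1, S_2, \ldots, S_n$, each of cardinality $m$, such that \[\lambda(q,r,s,m) \le f(S_j) \le \Lambda(q,r,s,m)\] and $|S_j \cap I_i| =1$ for all $1 \le j \le n$ and all $1 \le i \le m$.
   Context: $[N]=\{1,\dots,N\}$; $f(Y)=\sum_{y\in Y}f(y)$. A $d$-bounded gap sequence is a set of integers $a_1<a_2<\dots<a_k$ with $a_{i+1}-a_i\le d$ for all $1\le i\le k-1$. $L(r,s,m)=\{-rx+sy : x,y\in\mathbb{Z}, x,y\ge 0, x+y=m\}$, and for real $q\in[-rm,sm]$, $\lambda(q,r,s,m)=\max\{p\in L(r,s,m): p\le q\}$ and $\Lambda(q,r,s,m)=\min\{p\in L(r,s,m): p\ge q\}$. *)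

theory Defs
  imports Complex_Main
begin

definition bounded_gap_seq :: "int \<Rightarrow> int set \<Rightarrow> bool" where
  "bounded_gap_seq d S \<longleftrightarrow> finite S \<and>
     (let xs = sorted_list_of_set S in
        \<forall>i. Suc i < length xs \<longrightarrow> xs ! (Suc i) - xs ! i \<le> d)"

definition Lset :: "int \<Rightarrow> int \<Rightarrow> nat \<Rightarrow> int set" where
  "Lset r s m = {- r * int x + s * int y | x y. x + y = m}"

definition lam :: "real \<Rightarrow> int \<Rightarrow> int \<Rightarrow> nat \<Rightarrow> int" where
  "lam q r s m = Max {p \<in> Lset r s m. real_of_int p \<le> q}"

definition Lam :: "real \<Rightarrow> int \<Rightarrow> int \<Rightarrow> nat \<Rightarrow> int" where
  "Lam q r s m = Min {p \<in> Lset r s m. real_of_int p \<ge> q}"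

definition block :: "nat \<Rightarrow> nat \<Rightarrow> int set" where
  "block n i = {int ((i - 1) * n + 1) .. int (i * n)}"

end

theory Submission
  imports Defs
begin


definition C :: "(int \<Rightarrow> bool) \<Rightarrow> int \<Rightarrow> int \<Rightarrow> nat" where
  "C P a b = card {y \<in> {a..<b}. P y}"

lemma C_split: "a \<le> b \<Longrightarrow> b \<le> c \<Longrightarrow> C P a c = C P a b + C P b c"
proof -
  assume h: "a \<le> b" "b \<le> c"
  have "{y \<in> {a..<c}. P y} = {y \<in> {a..<b}. P y} \<union> {y \<in> {b..<c}. P y}" using h by auto
  moreover have "{y \<in> {a..<b}. P y} \<inter> {y \<in> {b..<c}. P y} = {}" by auto
  moreover have "finite {y \<in> {a..<b}. P y}" "finite {y \<in> {b..<c}. P y}"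
    by (rule finite_subset[of _ "{a..<b}"], auto) (rule finite_subset[of _ "{b..<c}"], auto)
  ultimately show ?thesis unfolding C_def by (metis (no_types, lifting) card_Un_disjoint)
qed

lemma C_compl: "a \<le> b \<Longrightarrow> C P a b + C (\<lambda>x. \<not> P x) a b = nat (b - a)"
proof -
  assume h: "a \<le> b"
  have "{a..<b} = {y \<in> {a..<b}. P y} \<union> {y \<in> {a..<b}. \<not> P y}" by auto
  hence "card {a..<b} = card {y \<in> {a..<b}. P y} + card {y \<in> {a..<b}. \<not> P y}"
    by (metis (no_types, lifting) card_Un_disjoint disjoint_iff finite_Un finite_atLeastLessThan_int mem_Collect_eq)
  thus ?thesis unfolding C_def by simp
qed

lemma C_strict: "a \<le> x \<Longrightarrow> x < b \<Longrightarrow> P x \<Longrightarrow> C P a x < C P a b"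
proof -
  assume h: "a \<le> x" "x < b" "P x"
  have "C P a b = C P a x + C P x b" using C_split[of a x b P] h by simp
  moreover have "C P x b \<ge> 1"
  proof -
    have "x \<in> {y \<in> {x..<b}. P y}" using h by auto
    moreover have "finite {y \<in> {x..<b}. P y}" by (rule finite_subset[of _ "{x..<b}"], auto)
    ultimately have "card {y \<in> {x..<b}. P y} > 0" using card_gt_0_iff by blast
    thus ?thesis unfolding C_def by simp
  qed
  ultimately show ?thesis by simp
qed

lemma cnt_mod: "j < n \<Longrightarrow> card {t \<in> {0..<Y}. t mod n = j} = Y div n + (if j < Y mod n then 1 else 0)"
proof (induction Y)
  case 0 then show ?case by simp
next
  case (Suc Y)
  have e: "{t \<in> {0..<Suc Y}. t mod n = j} = {t \<in> {0..<Y}. t mod n = j} \<union> (if Y mod n = j then {Y} else {})"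
    by (auto simp: less_Suc_eq)
  have "card {t \<in> {0..<Suc Y}. t mod n = j} = card {t \<in> {0..<Y}. t mod n = j} + (if Y mod n = j then 1 else 0)"
    unfolding e by auto
  also have "\<dots> = Suc Y div n + (if j < Suc Y mod n then 1 else 0)"
    using Suc by (auto simp: mod_Suc div_Suc)
  finally show ?case .
qed

lemma mod_inj_window: "(B::nat) \<le> u \<Longrightarrow> u < B + n \<Longrightarrow> B \<le> v \<Longrightarrow> v < B + n \<Longrightarrow> u mod n = v mod n \<Longrightarrow> u = v"
proof -
  assume h: "B \<le> u" "u < B + n" "B \<le> v" "v < B + n" "u mod n = v mod n"
  have *: "x \<le> y \<Longrightarrow> y < x + n \<Longrightarrow> x mod n = y mod n \<Longrightarrow> x = y" for x y :: nat
  proof -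
    assume a: "x \<le> y" "y < x + n" "x mod n = y mod n"
    have "n dvd (y - x)" using mod_eq_dvd_iff_nat[of x y n] a by simp
    moreover have "y - x < n" using a by linarith
    ultimately have "y - x = 0"
    proof -
      assume d: "n dvd (y - x)" "y - x < n"
      show "y - x = 0"
      proof (rule ccontr)
        assume "y - x \<noteq> 0"
        hence "n \<le> y - x" using d(1) dvd_imp_le by blast
        thus False using d(2) by simp
      qed
    qed
    thus "x = y" using a by linarith
  qed
  show "u = v"
  proof (cases "u \<le> v")
    case True show ?thesis by (rule *) (use True h in auto)
  next
    case False show ?thesis by (rule *[symmetric]) (use False h in auto)
  qed
qed

definition st :: "nat \<Rightarrow> int \<Rightarrow> int" where
  "st n x = ((x - 1) div int n) * int n + 1"

definition hh :: "nat \<Rightarrow> (int \<Rightarrow> bool) \<Rightarrow> int \<Rightarrow> nat" where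
  "hh n P x = (if P x then C P 1 x else C P 1 (st n x + int n) + C (\<lambda>y. \<not> P y) (st n x) x)"

definition gg :: "nat \<Rightarrow> (int \<Rightarrow> bool) \<Rightarrow> int \<Rightarrow> nat" where
  "gg n P x = hh n P x mod n"

lemma block_bounds: "i \<ge> 1 \<Longrightarrow> x \<in> block n i \<longleftrightarrow> int ((i-1)*n+1) \<le> x \<and> x < int ((i-1)*n+1) + int n"
  unfolding block_def using le_Suc_ex by (cases i) (auto simp: algebra_simps)

lemma st_block: assumes "n > 0" "i \<ge> 1" "x \<in> block n i" shows "st n x = int ((i-1)*n+1)"
proof -
  define k where "k = x - int ((i-1)*n+1)"
  have k: "0 \<le> k" "k < int n" using assms block_bounds k_def by auto
  have "x - 1 = k + int (i-1) * int n" unfolding k_def by simp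
  hence "(x - 1) div int n = k div int n + int (i-1)" using assms by simp
  also have "k div int n = 0" using k by simp
  finally show ?thesis unfolding st_def by simp
qed

lemma C_le_len: "a \<le> b \<Longrightarrow> C P a b \<le> nat (b - a)"
  using C_compl[of a b P] by linarith

lemma hh_window:
  assumes "n > 0" "i \<ge> 1" "x \<in> block n i"
  defines "a \<equiv> int ((i-1)*n+1)"
  shows "C P 1 a \<le> hh n P x \<and> hh n P x < C P 1 a + n"
proof -
  have x: "a \<le> x" "x < a + int n" using assms block_bounds by auto
  have a1: "1 \<le> a" unfolding a_def by simp
  have sx: "st n x = a" using st_block assms by simp
  have sp: "C P 1 x = C P 1 a + C P a x" using C_split[of 1 a x P] x a1 by simp
  have sp2: "C P 1 (a + int n) = C P 1 a + C P a (a + int n)" using C_split[of 1 a "a + int n" P] x a1 by simp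
  have cp: "C P a (a + int n) + C (\<lambda>y. \<not> P y) a (a + int n) = n" using C_compl[of a "a + int n" P] by simp
  show ?thesis
  proof (cases "P x")
    case True
    have "C P a x < C P a (a + int n)" using C_strict[of a x "a + int n" P] x True by simp
    thus ?thesis using True sp cp unfolding hh_def by simp
  next
    case False
    have "C (\<lambda>y. \<not> P y) a x < C (\<lambda>y. \<not> P y) a (a + int n)"
      using C_strict[of a x "a + int n" "\<lambda>y. \<not> P y"] x False by simp
    thus ?thesis using False sp2 cp sx unfolding hh_def by simp
  qed
qed

lemma hh_inj_lt:
  assumes "n > 0" "i \<ge> 1" "x \<in> block n i" "y \<in> block n i" "x < y"
  shows "hh n P x \<noteq> hh n P y"
proof -
  define a where "a = int ((i-1)*n+1)"
  have x: "a \<le> x" "x < a + int n" "a \<le> y" "y < a + int n" using assms block_bounds a_def by auto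
  have a1: "1 \<le> a" unfolding a_def by simp
  have sx: "st n x = a" "st n y = a" using st_block assms a_def by auto
  show ?thesis
  proof (cases "P x"; cases "P y")
    assume "P x" "P y"
    thus ?thesis using C_strict[of 1 x y P] x a1 assms unfolding hh_def by simp
  next
    assume "\<not> P x" "\<not> P y"
    thus ?thesis using C_strict[of a x y "\<lambda>y. \<not> P y"] x a1 assms sx unfolding hh_def by simp
  next
    assume "P x" "\<not> P y"
    thus ?thesis using C_strict[of 1 x "a + int n" P] x a1 assms sx unfolding hh_def by simp
  next
    assume "\<not> P x" "P y"
    thus ?thesis using C_strict[of 1 y "a + int n" P] x a1 assms sx unfolding hh_def by simp
  qed
qed

lemma gg_inj: assumes "n > 0" "i \<ge> 1" shows "inj_on (gg n P) (block n i)"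
proof (rule inj_onI)
  fix x y assume h: "x \<in> block n i" "y \<in> block n i" "gg n P x = gg n P y"
  define a where "a = int ((i-1)*n+1)"
  have w: "C P 1 a \<le> hh n P x \<and> hh n P x < C P 1 a + n" "C P 1 a \<le> hh n P y \<and> hh n P y < C P 1 a + n"
    using hh_window assms h a_def by auto
  have "hh n P x = hh n P y" using mod_inj_window[of "C P 1 a" "hh n P x" n "hh n P y"] w h unfolding gg_def by auto
  thus "x = y" using hh_inj_lt[OF assms h(1,2)] hh_inj_lt[OF assms h(2,1)] by (metis linorder_neqE)
qed

lemma gg_image: assumes "n > 0" "i \<ge> 1" shows "gg n P ` block n i = {0..<n}"
proof (rule card_subset_eq)
  show "finite {0..<n}" by simp
  show "gg n P ` block n i \<subseteq> {0..<n}" unfolding gg_def using assms by auto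
  have "card (block n i) = n" unfolding block_def using assms by (cases i) (auto simp: algebra_simps)
  thus "card (gg n P ` block n i) = card {0..<n}" using card_image[OF gg_inj[OF assms]] by simp
qed

lemma gg_unique: assumes "n > 0" "i \<ge> 1" "j < n" shows "\<exists>!x. x \<in> block n i \<and> gg n P x = j"
proof -
  obtain x where "x \<in> block n i" "gg n P x = j" using gg_image[OF assms(1,2)] assms(3)
    by (metis atLeastLessThan_iff image_iff zero_le)
  thus ?thesis using gg_inj[OF assms(1,2)] unfolding inj_on_def by blast
qed



lemma count_P:
  assumes "n > 0" "j < n"
  shows "card {x \<in> {1..int N}. P x \<and> gg n P x = j} = card {t \<in> {0..<C P 1 (int N + 1)}. t mod n = j}"
proof -
  define A where "A = {x \<in> {1..int N}. P x}"
  define Y where "Y = C P 1 (int N + 1)"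
  have inj: "inj_on (C P 1) A"
  proof (rule inj_onI)
    fix x y assume h: "x \<in> A" "y \<in> A" "C P 1 x = C P 1 y"
    show "x = y"
    proof (rule ccontr)
      assume "x \<noteq> y"
      hence "x < y \<or> y < x" by linarith
      thus False using C_strict[of 1 x y P] C_strict[of 1 y x P] h unfolding A_def by auto
    qed
  qed
  have AY: "{y \<in> {1..<int N + 1}. P y} = A" unfolding A_def by auto
  have img: "C P 1 ` A = {0..<Y}"
  proof (rule card_subset_eq)
    show "finite {0..<Y}" by simp
    show "C P 1 ` A \<subseteq> {0..<Y}"
    proof
      fix t assume "t \<in> C P 1 ` A"
      then obtain x where x: "x \<in> A" "t = C P 1 x" by blast
      have "C P 1 x < C P 1 (int N + 1)" using C_strict[of 1 x "int N + 1" P] x unfolding A_def by auto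
      thus "t \<in> {0..<Y}" using x Y_def by simp
    qed
    have "card (C P 1 ` A) = card A" using card_image[OF inj] .
    also have "\<dots> = Y" unfolding Y_def C_def AY ..
    finally show "card (C P 1 ` A) = card {0..<Y}" by simp
  qed
  define B where "B = {x \<in> A. C P 1 x mod n = j}"
  have B: "{x \<in> {1..int N}. P x \<and> gg n P x = j} = B"
    unfolding B_def A_def gg_def hh_def by auto
  have "C P 1 ` B = {t \<in> {0..<Y}. t mod n = j}"
  proof (rule set_eqI, rule iffI)
    fix t assume "t \<in> C P 1 ` B"
    then obtain x where x: "x \<in> A" "C P 1 x mod n = j" "t = C P 1 x" unfolding B_def by blast
    have "t \<in> {0..<Y}" using img x by blast
    thus "t \<in> {t \<in> {0..<Y}. t mod n = j}" using x by simp
  next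
    fix t assume t: "t \<in> {t \<in> {0..<Y}. t mod n = j}"
    hence "t \<in> C P 1 ` A" using img by simp
    then obtain x where x: "x \<in> A" "t = C P 1 x" by blast
    hence "x \<in> B" using t unfolding B_def by simp
    thus "t \<in> C P 1 ` B" using x by blast
  qed
  moreover have "card (C P 1 ` B) = card B"
    by (rule card_image, rule inj_on_subset[OF inj]) (auto simp: B_def)
  ultimately show ?thesis using B Y_def by simp
qed

lemma gap_lemma:
  assumes "n > 0" "\<forall>i \<in> {1..m}. e i \<in> block n i"
  shows "bounded_gap_seq (2 * int n - 1) (e ` {1..m}) \<and> card (e ` {1..m}) = m"
proof -
  define xs where "xs = map e [1..<m+1]"
  have lo: "int ((i-1)*n+1) \<le> e i" and hi: "e i \<le> int (i*n)" if "i \<in> {1..m}" for i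
    using assms that unfolding block_def by auto
  have mono: "e a < e b" if "a \<in> {1..m}" "b \<in> {1..m}" "a < b" for a b
  proof -
    have "a \<le> b - 1" using that by simp
    hence "a * n \<le> (b-1) * n" by (rule mult_right_mono) simp
    thus ?thesis using lo[OF that(2)] hi[OF that(1)] by linarith
  qed
  have sw: "sorted_wrt (<) xs" unfolding xs_def sorted_wrt_map
    by (rule sorted_wrt_mono_rel[OF _ sorted_wrt_upt]) (auto intro: mono)
  have setxs: "set xs = e ` {1..m}" unfolding xs_def by auto
  have ds: "distinct xs" "sorted xs" using sw strict_sorted_iff by auto
  have "sorted_list_of_set (set xs) = xs"
    using ds by (simp add: sorted_list_of_set_sort_remdups distinct_remdups_id sorted_sort_id)
  hence sl: "sorted_list_of_set (e ` {1..m}) = xs" using setxs by simp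
  have len: "length xs = m" unfolding xs_def by simp
  have card: "card (e ` {1..m}) = m"
    using distinct_card[OF ds(1)] setxs len by simp
  have "xs ! (Suc k) - xs ! k \<le> 2 * int n - 1" if "Suc k < length xs" for k
  proof -
    have k: "Suc k < m" using that len by simp
    have nx: "xs ! i = e (1 + i)" if "i < m" for i using that unfolding xs_def by (simp del: upt_Suc)
    have "xs ! Suc k = e (k+2)" "xs ! k = e (k+1)" using nx[of "Suc k"] nx[of k] k by simp_all
    moreover have "e (k+2) \<le> int ((k+2)*n)" using hi[of "k+2"] k by simp
    moreover have "int (k*n+1) \<le> e (k+1)" using lo[of "k+1"] k by simp
    ultimately show ?thesis by (simp add: algebra_simps)
  qed
  thus ?thesis unfolding bounded_gap_seq_def Let_def using sl card by auto
qed

lemma sum_two: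
  assumes "finite A" "\<forall>x \<in> A. f x \<in> {- r, s}" "- r \<noteq> (s::int)"
  shows "sum f A = s * int (card {x \<in> A. f x = s}) - r * int (card A - card {x \<in> A. f x = s})"
proof -
  define B where "B = {x \<in> A. f x = s}"
  define D where "D = {x \<in> A. f x \<noteq> s}"
  have AU: "A = B \<union> D" "B \<inter> D = {}" unfolding B_def D_def by auto
  have fin: "finite B" "finite D" using assms(1) unfolding B_def D_def by auto
  have "sum f A = sum f (B \<union> D)" using AU(1) by simp
  also have "\<dots> = sum f B + sum f D" by (rule sum.union_disjoint[OF fin AU(2)])
  finally have "sum f A = sum f B + sum f D" .
  moreover have "sum f B = sum (\<lambda>_. s) B" by (rule sum.cong) (auto simp: B_def)
  moreover have "sum f D = sum (\<lambda>_. - r) D" by (rule sum.cong) (use assms(2) in \<open>auto simp: D_def\<close>)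
  moreover have "card A = card B + card D" using AU(1) card_Un_disjoint[OF fin AU(2)] by simp
  ultimately show ?thesis unfolding B_def[symmetric] by (simp add: algebra_simps)
qed



lemma Lset_eq: "Lset r s m = (\<lambda>y. s * int y - r * int (m - y)) ` {0..m}"
proof (rule set_eqI, rule iffI)
  fix p assume "p \<in> Lset r s m"
  then obtain x y where xy: "p = - r * int x + s * int y" "x + y = m" unfolding Lset_def by blast
  show "p \<in> (\<lambda>y. s * int y - r * int (m - y)) ` {0..m}"
    by (rule image_eqI[of _ _ y]) (use xy in auto)
next
  fix p assume "p \<in> (\<lambda>y. s * int y - r * int (m - y)) ` {0..m}"
  then obtain y where y: "y \<le> m" "p = s * int y - r * int (m - y)" by auto
  show "p \<in> Lset r s m" unfolding Lset_def
    by (rule CollectI, rule exI[of _ "m - y"], rule exI[of _ y]) (use y in auto)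
qed

lemma key_le:
  assumes "(K::int) > 0" "N > 0" "N * (K * a - R) \<le> K * Y - R * N"
  shows "N * a \<le> Y"
proof -
  have "K * (N * a) \<le> K * Y" using assms(3) by (simp add: algebra_simps)
  thus ?thesis using assms(1) by simp
qed

lemma key_ge:
  assumes "(K::int) > 0" "N > 0" "N * (K * a - R) \<ge> K * Y - R * N"
  shows "N * a \<ge> Y"
proof -
  have "K * (N * a) \<ge> K * Y" using assms(3) by (simp add: algebra_simps)
  thus ?thesis using assms(1) by simp
qed

lemma lamLam:
  fixes r s :: int and n m Y y d :: nat
  assumes "r > 0" "s > 0" "n > 0" "Y \<le> n * m"
    and q: "q = real_of_int (s * int Y - r * int (n * m - Y)) / real n"
    and y: "y = Y div n + d" "d \<le> 1" "d = 1 \<longrightarrow> Y mod n > 0"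
  shows "lam q r s m \<le> s * int y - r * int (m - y) \<and> s * int y - r * int (m - y) \<le> Lam q r s m"
proof -
  define T where "T = s * int Y - r * int (n * m - Y)"
  define \<phi> where "\<phi> = (\<lambda>y. s * int y - r * int (m - y))"
  have phi: "\<phi> z = (r + s) * int z - r * int m" if "z \<le> m" for z
    using that unfolding \<phi>_def by (simp add: of_nat_diff algebra_simps)
  have T: "T = (r + s) * int Y - r * (int m * int n)"
    using assms(4) unfolding T_def by (simp add: of_nat_diff algebra_simps)
  have qT: "real_of_int p \<le> q \<longleftrightarrow> int n * p \<le> T" for p
  proof -
    have "real_of_int p \<le> q \<longleftrightarrow> real n * real_of_int p \<le> real_of_int T"
      unfolding q T_def using assms(3) by (simp add: pos_le_divide_eq mult.commute)
    also have "\<dots> \<longleftrightarrow> int n * p \<le> T"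
      using of_int_le_iff[of "int n * p" T, where 'a=real] by simp
    finally show ?thesis .
  qed
  have qT2: "real_of_int p \<ge> q \<longleftrightarrow> int n * p \<ge> T" for p
  proof -
    have "real_of_int p \<ge> q \<longleftrightarrow> real n * real_of_int p \<ge> real_of_int T"
      unfolding q T_def using assms(3) by (simp add: pos_divide_le_eq mult.commute)
    also have "\<dots> \<longleftrightarrow> int n * p \<ge> T"
      using of_int_le_iff[of T "int n * p", where 'a=real] by simp
    finally show ?thesis .
  qed
  have Ym: "Y div n \<le> m" using assms(3,4)
    using div_le_mono[OF assms(4), of n] by simp
  have ym: "y \<le> m"
  proof (cases "d = 0")
    case True thus ?thesis using y Ym by simp
  next
    case False
    hence d1: "d = 1" using y by simp
    have "n * (Y div n) + Y mod n = Y" by simp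
    hence "n * (Y div n) < n * m" using d1 y assms(4) by linarith
    hence "Y div n < m" by simp
    thus ?thesis using y d1 by simp
  qed
  have L: "Lset r s m = \<phi> ` {0..m}" unfolding \<phi>_def by (rule Lset_eq)
  have finL: "finite (Lset r s m)" using L by simp
  have rs: "r + s > 0" using assms by simp
  have lo: "lam q r s m \<le> \<phi> y"
  proof -
    have ne: "\<phi> 0 \<in> {p \<in> Lset r s m. real_of_int p \<le> q}"
    proof -
      have "int n * \<phi> 0 \<le> T" unfolding phi[OF le0] T
        using assms(1,2) by (simp add: algebra_simps mult_left_mono)
      thus ?thesis using L qT by auto
    qed
    have fin: "finite {p \<in> Lset r s m. real_of_int p \<le> q}" using finL by simp
    have "lam q r s m \<in> {p \<in> Lset r s m. real_of_int p \<le> q}"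
      unfolding lam_def by (rule Max_in[OF fin]) (use ne in blast)
    then obtain z where z: "z \<le> m" "lam q r s m = \<phi> z" "int n * \<phi> z \<le> T" using L qT by auto
    have pz: "\<phi> z = (r + s) * int z - r * int m" using phi z(1) by simp
    have pr: "int n * ((r + s) * int z - r * int m) \<le> (r + s) * int Y - r * int m * int n"
      using z(3) unfolding pz T by (simp add: ac_simps)
    have "int n * int z \<le> int Y"
      by (rule key_le[OF rs _ pr]) (use assms(3) in simp)
    hence nzY: "n * z \<le> Y" by (metis of_nat_le_iff of_nat_mult)
    have "z \<le> Y div n" using div_le_mono[OF nzY, of n] assms(3) by simp
    hence zy: "z \<le> y" using y by simp
    have "(r + s) * int z \<le> (r + s) * int y" by (rule mult_left_mono) (use zy rs in auto)
    thus ?thesis using z(2) phi[OF z(1)] phi[OF ym] by linarith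
  qed
  have hi: "\<phi> y \<le> Lam q r s m"
  proof -
    have ne: "\<phi> m \<in> {p \<in> Lset r s m. real_of_int p \<ge> q}"
    proof -
      have "int Y \<le> int n * int m" using assms(4) by (metis of_nat_le_iff of_nat_mult)
      hence "(r + s) * int Y \<le> (r + s) * (int n * int m)" using rs by (simp add: mult_left_mono)
      hence "int n * \<phi> m \<ge> T" unfolding phi[OF order_refl] T by (simp add: algebra_simps)
      thus ?thesis using L qT2 by auto
    qed
    have fin: "finite {p \<in> Lset r s m. real_of_int p \<ge> q}" using finL by simp
    have "Lam q r s m \<in> {p \<in> Lset r s m. real_of_int p \<ge> q}"
      unfolding Lam_def by (rule Min_in[OF fin]) (use ne in blast)
    then obtain z where z: "z \<le> m" "Lam q r s m = \<phi> z" "int n * \<phi> z \<ge> T" using L qT2 by auto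
    have pz: "\<phi> z = (r + s) * int z - r * int m" using phi z(1) by simp
    have pr: "int n * ((r + s) * int z - r * int m) \<ge> (r + s) * int Y - r * int m * int n"
      using z(3) unfolding pz T by (simp add: ac_simps)
    have "int n * int z \<ge> int Y"
      by (rule key_ge[OF rs _ pr]) (use assms(3) in simp)
    hence nz: "n * z \<ge> Y" by (metis of_nat_le_iff of_nat_mult)
    have "y \<le> z"
    proof (cases "d = 0")
      case True
      have "n * (Y div n) + Y mod n = Y" by simp
      hence "n * (Y div n) \<le> n * z" using nz by linarith
      thus ?thesis using True y assms(3) by simp
    next
      case False
      hence d1: "d = 1" using y by simp
      have "n * (Y div n) + Y mod n = Y" by simp
      hence "n * (Y div n) < n * z" using d1 y nz by linarith
      hence "Y div n < z" by simp
      thus ?thesis using y d1 by simp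
    qed
    hence "(r + s) * int y \<le> (r + s) * int z" by (intro mult_left_mono) (use rs in auto)
    thus ?thesis using z(2) phi[OF z(1)] phi[OF ym] by linarith
  qed
  show ?thesis using lo hi unfolding \<phi>_def by simp
qed



lemma in_some_block:
  assumes "n > 0" "x \<in> {1 .. int (n * m)}"
  shows "\<exists>i \<in> {1..m}. x \<in> block n i"
proof -
  define k where "k = (x - 1) div int n"
  define i where "i = nat k + 1"
  have x1: "x - 1 = k * int n + (x - 1) mod int n" unfolding k_def by simp
  have md: "0 \<le> (x - 1) mod int n" "(x - 1) mod int n < int n" using assms(1) by simp_all
  have k0: "0 \<le> k" unfolding k_def using assms by (simp add: pos_imp_zdiv_nonneg_iff)
  have ik: "int ((i - 1) * n + 1) = k * int n + 1" unfolding i_def using k0 by simp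
  have "x \<in> block n i" using block_bounds[of i x n] ik x1 md unfolding i_def by simp
  moreover have "i \<le> m"
  proof -
    have a1: "k * int n \<le> x - 1" using x1 md(1) by linarith
    have a2: "x - 1 < int n * int m" using assms(2) by simp
    have "k * int n < int m * int n" by (metis a1 a2 mult.commute order_le_less_trans)
    hence "k < int m" using assms(1) by (simp add: mult_less_cancel_right)
    thus ?thesis unfolding i_def using k0 by simp
  qed
  ultimately show ?thesis unfolding i_def by auto
qed

lemma block_sub: "i \<in> {1..m} \<Longrightarrow> block n i \<subseteq> {1 .. int (n * m)}"
proof -
  assume i: "i \<in> {1..m}"
  have "i * n \<le> n * m" using i by (simp add: mult.commute)
  hence "int (i * n) \<le> int (n * m)" by (simp only: of_nat_le_iff)
  thus ?thesis unfolding block_def by auto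
qed

theorem theorem4p6:
  fixes r s :: int and m n :: nat and f :: "int \<Rightarrow> int"
  assumes "r > 0" "s > 0" "m > 0" "n > 0"
    and "\<forall>x \<in> {1 .. int (n * m)}. f x \<in> {- r, s}"
  defines "q \<equiv> real_of_int (\<Sum>x \<in> {1 .. int (n * m)}. f x) / real n"
  shows "\<exists>S :: nat \<Rightarrow> int set.
           (\<Union>j \<in> {1..n}. S j) = {1 .. int (n * m)} \<and>
           (\<forall>j \<in> {1..n}. \<forall>j' \<in> {1..n}. j \<noteq> j' \<longrightarrow> S j \<inter> S j' = {}) \<and>
           (\<forall>j \<in> {1..n}.
              bounded_gap_seq (2 * int n - 1) (S j) \<and>
              card (S j) = m \<and>
              lam q r s m \<le> (\<Sum>x \<in> S j. f x) \<and>
              (\<Sum>x \<in> S j. f x) \<le> Lam q r s m \<and>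
              (\<forall>i \<in> {1..m}. card (S j \<inter> block n i) = 1))"
proof -
  define P where "P = (\<lambda>x. f x = s)"
  define g where "g = gg n P"
  define N where "N = n * m"
  define S where "S = (\<lambda>j::nat. {x \<in> {1 .. int N}. g x = j - 1})"
  define Y where "Y = C P 1 (int N + 1)"
  have rs: "- r \<noteq> s" using assms(1,2) by simp
  have AY: "{x \<in> {1 .. int N}. f x = s} = {y \<in> {1..<int N + 1}. f y = s}" by auto
  have cardA: "card {x \<in> {1 .. int N}. f x = s} = Y"
    unfolding Y_def C_def P_def by (simp only: AY)
  have YN: "Y \<le> N" using C_le_len[of 1 "int N + 1" P] unfolding Y_def by simp
  have cN: "card {1 .. int N} = N" by simp
  have f5: "\<forall>x \<in> {1 .. int N}. f x \<in> {- r, s}" using assms(5) unfolding N_def .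
  have tot: "(\<Sum>x \<in> {1 .. int N}. f x) = s * int Y - r * int (N - Y)"
    using sum_two[of "{1 .. int N}" f r s, OF _ f5 rs] cardA cN by simp
  have qd: "q = real_of_int (s * int Y - r * int (n * m - Y)) / real n"
    unfolding q_def using tot unfolding N_def by simp
  have gl: "g x < n" for x unfolding g_def gg_def using assms(4) by simp
  have part1: "(\<Union>j \<in> {1..n}. S j) = {1 .. int (n * m)}"
  proof
    show "(\<Union>j \<in> {1..n}. S j) \<subseteq> {1 .. int (n * m)}" unfolding S_def N_def by auto
    show "{1 .. int (n * m)} \<subseteq> (\<Union>j \<in> {1..n}. S j)"
    proof
      fix x assume x: "x \<in> {1 .. int (n * m)}"
      have "Suc (g x) \<in> {1..n}" using gl[of x] by simp
      moreover have "x \<in> S (Suc (g x))" unfolding S_def N_def using x by simp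
      ultimately show "x \<in> (\<Union>j \<in> {1..n}. S j)" by blast
    qed
  qed
  have part2: "\<forall>j \<in> {1..n}. \<forall>j' \<in> {1..n}. j \<noteq> j' \<longrightarrow> S j \<inter> S j' = {}"
    unfolding S_def by auto
  have part3: "bounded_gap_seq (2 * int n - 1) (S j) \<and> card (S j) = m \<and>
              lam q r s m \<le> (\<Sum>x \<in> S j. f x) \<and> (\<Sum>x \<in> S j. f x) \<le> Lam q r s m \<and>
              (\<forall>i \<in> {1..m}. card (S j \<inter> block n i) = 1)" if j: "j \<in> {1..n}" for j
  proof -
    have jn: "j - 1 < n" using j by auto
    have uq: "\<exists>!x. x \<in> block n i \<and> g x = j - 1" if "i \<in> {1..m}" for i
      unfolding g_def by (rule gg_unique[OF assms(4) _ jn]) (use that in auto)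
    define e where "e = (\<lambda>i. THE x. x \<in> block n i \<and> g x = j - 1)"
    have e: "e i \<in> block n i \<and> g (e i) = j - 1" if "i \<in> {1..m}" for i
      unfolding e_def using theI'[OF uq[OF that]] .
    have Sblk: "S j \<inter> block n i = {e i}" if i: "i \<in> {1..m}" for i
    proof
      show "S j \<inter> block n i \<subseteq> {e i}"
      proof
        fix x assume "x \<in> S j \<inter> block n i"
        hence "x \<in> block n i \<and> g x = j - 1" unfolding S_def by auto
        thus "x \<in> {e i}" using e[OF i] uq[OF i] by blast
      qed
      show "{e i} \<subseteq> S j \<inter> block n i" using e[OF i] block_sub[OF i, of n] unfolding S_def N_def by auto
    qed
    have Se: "S j = e ` {1..m}"
    proof
      show "e ` {1..m} \<subseteq> S j" using Sblk by blast
      show "S j \<subseteq> e ` {1..m}"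
      proof
        fix x assume x: "x \<in> S j"
        hence "x \<in> {1 .. int (n * m)}" unfolding S_def N_def by simp
        then obtain i where i: "i \<in> {1..m}" "x \<in> block n i" using in_some_block[OF assms(4)] by blast
        hence "x \<in> S j \<inter> block n i" using x by simp
        hence "x = e i" using Sblk[OF i(1)] by simp
        thus "x \<in> e ` {1..m}" using i by simp
      qed
    qed
    have gap: "bounded_gap_seq (2 * int n - 1) (S j) \<and> card (S j) = m"
      unfolding Se by (rule gap_lemma[OF assms(4)]) (use e in blast)
    define d where "d = (if j - 1 < Y mod n then 1 else 0 :: nat)"
    have d1: "d \<le> 1" "d = 1 \<longrightarrow> Y mod n > 0" unfolding d_def by simp_all
    have yj: "card {x \<in> S j. f x = s} = Y div n + d"
    proof -
      have "{x \<in> S j. f x = s} = {x \<in> {1..int N}. P x \<and> gg n P x = j - 1}"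
        unfolding S_def g_def P_def by auto
      hence "card {x \<in> S j. f x = s} = card {t \<in> {0..<Y}. t mod n = j - 1}"
        using count_P[OF assms(4) jn, of N P] unfolding Y_def by simp
      thus ?thesis using cnt_mod[OF jn, of Y] unfolding d_def by simp
    qed
    have fS: "\<forall>x \<in> S j. f x \<in> {- r, s}" using assms(5) unfolding S_def N_def by auto
    have sumS: "(\<Sum>x \<in> S j. f x) = s * int (Y div n + d) - r * int (m - (Y div n + d))"
      using sum_two[of "S j" f r s] fS rs gap yj unfolding Se by simp
    have ll: "lam q r s m \<le> (\<Sum>x \<in> S j. f x) \<and> (\<Sum>x \<in> S j. f x) \<le> Lam q r s m"
      unfolding sumS
      by (rule lamLam[OF assms(1,2,4) _ qd refl d1(1) d1(2)]) (use YN N_def in simp)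
    have hb: "\<forall>i \<in> {1..m}. card (S j \<inter> block n i) = 1" using Sblk by simp
    from gap ll hb show ?thesis by (intro conjI) (elim conjE; assumption)+
  qed
  show ?thesis
  proof (rule exI[of _ S], intro conjI)
    show "(\<Union>j \<in> {1..n}. S j) = {1 .. int (n * m)}" by (rule part1)
    show "\<forall>j \<in> {1..n}. \<forall>j' \<in> {1..n}. j \<noteq> j' \<longrightarrow> S j \<inter> S j' = {}" by (rule part2)
    show "\<forall>j \<in> {1..n}.
              bounded_gap_seq (2 * int n - 1) (S j) \<and>
              card (S j) = m \<and>
              lam q r s m \<le> (\<Sum>x \<in> S j. f x) \<and>
              (\<Sum>x \<in> S j. f x) \<le> Lam q r s m \<and>
              (\<forall>i \<in> {1..m}. card (S j \<inter> block n i) = 1)"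
      by (intro ballI, rule part3)
  qed
qed

end
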